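(* If the matrix $i\begin{pmatrix}\langle U_\alpha,\bar U_{\bar\beta}\rangle&\langle U_\alpha,V\rangle\\ \langle\bar V,\bar U_{\bar\beta}\rangle&\langle\bar V,V\rangle\end{pmatrix}$ is positive definite, then the $(n+1)\times(n+1)$ matrix $\begin{pmatrix}\mathcal{D}_\alpha X^I&\bar X^I\end{pmatrix}$ (columns indexed by $\alpha=1,\dots,n$ and one extra column) is invertible.
   Context: $V=\begin{pmatrix}X^I\\ F_I\end{pmatrix}$ ($I=0,\dots,n$) over an $n$-dimensional Kähler manifold with coordinates $z^\alpha$ and Kähler potential $K$; $U_\alpha=\mathcal{D}_\alpha V=\begin{pmatrix}\mathcal{D}_\alpha X^I\\ \mathcal{D}_\alpha F_I\end{pmatrix}$ with $\mathcal{D}_\alpha V=\partial_\alpha V+\tfrac12(\partial_\alpha K)V$, and $\bar U_{\bar\alpha}$ its complex conjugate; $\langle A,B\rangle=A^T\Omega B$ with $\Omega=\begin{pmatrix}0&\mathbb{1}\\-\mathbb{1}&0\end{pmatrix}$. *)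

theory Defs
  imports "HOL-Analysis.Analysis"
begin

text \<open>Local holomorphic coordinates z = (z^alpha) on an open subset of C^n are modelled by
  vectors of type complex^'n. Sections X^I, F_I are functions complex^'n => complex^'i
  (index I ranges over a type 'i with CARD('i) = n+1).\<close>

text \<open>Wirtinger (holomorphic) partial derivative d/dz^alpha of a (real-)differentiable map,
  expressed through its real Frechet derivative: (1/2)(d/dx^alpha - i d/dy^alpha).\<close>
definition wirt_vec :: "(complex^'n \<Rightarrow> complex^'i) \<Rightarrow> complex^'n \<Rightarrow> 'n \<Rightarrow> complex^'i" where
  "wirt_vec f z a = (1/2) *s (frechet_derivative f (at z) (axis a 1)
                              - \<i> *s frechet_derivative f (at z) (axis a \<i>))"

definition wirt_real :: "(complex^'n \<Rightarrow> real) \<Rightarrow> complex^'n \<Rightarrow> 'n \<Rightarrow> complex" where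
  "wirt_real K z a = (1/2) * (complex_of_real (frechet_derivative K (at z) (axis a 1))
                              - \<i> * complex_of_real (frechet_derivative K (at z) (axis a \<i>)))"

definition kcov :: "(complex^'n \<Rightarrow> real) \<Rightarrow> (complex^'n \<Rightarrow> complex^'i) \<Rightarrow> complex^'n \<Rightarrow> 'n \<Rightarrow> complex^'i" where
  "kcov K f z a = wirt_vec f z a + ((1/2) * wirt_real K z a) *s f z"

text \<open>Symplectic product <A,B> = A^T Omega B, Omega = ((0,1),(-1,0)), of symplectic vectors
  A = (A^I, A_I) represented as pairs (upper component, lower component).\<close>
definition symp :: "(complex^'i) \<times> (complex^'i) \<Rightarrow> (complex^'i) \<times> (complex^'i) \<Rightarrow> complex" where
  "symp A B = (\<Sum>I\<in>UNIV. fst A $ I * snd B $ I - snd A $ I * fst B $ I)"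

definition cnjv :: "complex^'i \<Rightarrow> complex^'i" where
  "cnjv v = (\<chi> I. cnj (v $ I))"

definition pos_def_cmat :: "complex^'k^'k \<Rightarrow> bool" where
  "pos_def_cmat M \<longleftrightarrow> (\<forall>x::complex^'k. x \<noteq> 0 \<longrightarrow>
     (let q = (\<Sum>a\<in>UNIV. \<Sum>b\<in>UNIV. cnj (x $ a) * M $ a $ b * x $ b) in q \<in> \<real> \<and> Re q > 0))"

end

theory Submission
  imports Defs
begin

lemma inj_imp_invertible:
  fixes A :: "'a::field^'n^'m"
  assumes "CARD('n) = CARD('m)" and "\<And>x. A *v x = 0 \<Longrightarrow> x = 0"
  shows "invertible A"
proof -
  have "\<exists>B. B ** A = mat 1" unfolding matrix_left_invertible_ker using assms(2) by blast
  then obtain B where B: "B ** A = mat 1" by blast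
  have inj: "inj ((*v) A)" unfolding vec.inj_iff_eq_0 using assms(2) by blast
  have dims: "vec.dim (UNIV :: ('a^'m) set) = vec.dim (UNIV :: ('a^'n) set)"
    unfolding vec.dim_UNIV card_cart_basis using assms(1) by simp
  have "surj ((*v) A)"
    by (rule vec.linear_injective_imp_surjective[OF matrix_vector_mul_linear_gen inj dims])
  then have "\<exists>C. A ** C = mat 1" unfolding matrix_right_invertible_surjective .
  then obtain C where C: "A ** C = mat 1" by blast
  have "B = B ** (A ** C)" by (simp add: C matrix_mul_rid)
  also have "\<dots> = (B ** A) ** C" by (simp add: matrix_mul_assoc)
  also have "\<dots> = C" by (simp add: B matrix_mul_lid)
  finally have "B = C" .
  then show ?thesis unfolding invertible_def using B C by blast
qed

lemma quad_zero:
  fixes c :: "'k \<Rightarrow> complex" and U L :: "'k \<Rightarrow> 'i \<Rightarrow> complex"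
  assumes S: "\<And>I. (\<Sum>a\<in>A. c a * U a I) = 0"
  shows "(\<Sum>a\<in>A. \<Sum>b\<in>A. c a * (\<i> * (\<Sum>I\<in>J. U a I * cnj (L b I) - L a I * cnj (U b I))) * cnj (c b)) = 0"
proof -
  have pt: "ca * (\<i> * (u * cnj l - l' * cnj u')) * cnj cb = \<i> * cnj (cb * l) * (ca * u) - \<i> * (ca * l') * cnj (cb * u')"
    for ca cb u l l' u' :: complex
    unfolding complex_cnj_mult by algebra
  have e: "c a * (\<i> * (\<Sum>I\<in>J. U a I * cnj (L b I) - L a I * cnj (U b I))) * cnj (c b)
     = (\<Sum>I\<in>J. \<i> * cnj (c b * L b I) * (c a * U a I)) - (\<Sum>I\<in>J. \<i> * (c a * L a I) * cnj (c b * U b I))" for a b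
    unfolding sum_subtractf[symmetric] sum_distrib_left sum_distrib_right pt ..
  have t1: "(\<Sum>a\<in>A. \<Sum>b\<in>A. \<Sum>I\<in>J. \<i> * cnj (c b * L b I) * (c a * U a I)) = 0"
  proof -
    have "(\<Sum>a\<in>A. \<Sum>b\<in>A. \<Sum>I\<in>J. \<i> * cnj (c b * L b I) * (c a * U a I))
       = (\<Sum>b\<in>A. \<Sum>a\<in>A. \<Sum>I\<in>J. \<i> * cnj (c b * L b I) * (c a * U a I))"
      by (rule sum.swap)
    also have "\<dots> = (\<Sum>b\<in>A. \<Sum>I\<in>J. \<Sum>a\<in>A. \<i> * cnj (c b * L b I) * (c a * U a I))"
      by (rule sum.cong[OF refl], rule sum.swap)
    also have "\<dots> = (\<Sum>b\<in>A. \<Sum>I\<in>J. \<i> * cnj (c b * L b I) * (\<Sum>a\<in>A. c a * U a I))"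
      by (simp only: sum_distrib_left)
    also have "\<dots> = 0" by (simp only: S mult_zero_right sum.neutral_const)
    finally show ?thesis .
  qed
  have t2: "(\<Sum>a\<in>A. \<Sum>b\<in>A. \<Sum>I\<in>J. \<i> * (c a * L a I) * cnj (c b * U b I)) = 0"
  proof -
    have "(\<Sum>a\<in>A. \<Sum>b\<in>A. \<Sum>I\<in>J. \<i> * (c a * L a I) * cnj (c b * U b I))
       = (\<Sum>a\<in>A. \<Sum>I\<in>J. \<Sum>b\<in>A. \<i> * (c a * L a I) * cnj (c b * U b I))"
      by (rule sum.cong[OF refl], rule sum.swap)
    also have "\<dots> = (\<Sum>a\<in>A. \<Sum>I\<in>J. \<i> * (c a * L a I) * cnj (\<Sum>b\<in>A. c b * U b I))"
      by (simp only: sum_distrib_left cnj_sum)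
    also have "\<dots> = 0" by (simp only: S complex_cnj_zero mult_zero_right sum.neutral_const)
    finally show ?thesis .
  qed
  show ?thesis
    unfolding e by (simp only: sum_subtractf t1 t2 diff_self)
qed

theorem lemma7:
  fixes X F :: "complex^'n \<Rightarrow> complex^'i"
    and K :: "complex^'n \<Rightarrow> real"
    and z :: "complex^'n"
  assumes dim: "CARD('i) = CARD('n) + 1"
    and dX: "X differentiable (at z)"
    and dF: "F differentiable (at z)"
    and dK: "K differentiable (at z)"
    and pd: "pos_def_cmat
      (\<chi> a b. \<i> * (case a of
           Some \<alpha> \<Rightarrow> (case b of
               Some \<beta> \<Rightarrow> symp (kcov K X z \<alpha>, kcov K F z \<alpha>) (cnjv (kcov K X z \<beta>), cnjv (kcov K F z \<beta>))
             | None \<Rightarrow> symp (kcov K X z \<alpha>, kcov K F z \<alpha>) (X z, F z))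
         | None \<Rightarrow> (case b of
               Some \<beta> \<Rightarrow> symp (cnjv (X z), cnjv (F z)) (cnjv (kcov K X z \<beta>), cnjv (kcov K F z \<beta>))
             | None \<Rightarrow> symp (cnjv (X z), cnjv (F z)) (X z, F z))))"
  shows "invertible ((\<chi> I c. case c of Some \<alpha> \<Rightarrow> kcov K X z \<alpha> $ I | None \<Rightarrow> cnj (X z $ I))
                      :: complex^'n option^'i)"
proof (rule inj_imp_invertible)
  show "CARD('n option) = CARD('i)" using dim by (simp add: card_UNIV_option)
next
  define Wu where "Wu a = (case a of Some \<alpha> \<Rightarrow> kcov K X z \<alpha> | None \<Rightarrow> cnjv (X z))" for a
  define Wl where "Wl a = (case a of Some \<alpha> \<Rightarrow> kcov K F z \<alpha> | None \<Rightarrow> cnjv (F z))" for a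
  fix c :: "complex^'n option"
  assume Ac: "(\<chi> I c. case c of Some \<alpha> \<Rightarrow> kcov K X z \<alpha> $ I | None \<Rightarrow> cnj (X z $ I)) *v c = 0"
  have S: "(\<Sum>a\<in>UNIV. c $ a * (Wu a $ I)) = 0" for I
  proof -
    have "(\<Sum>a\<in>UNIV. c $ a * (Wu a $ I))
       = ((\<chi> I c. case c of Some \<alpha> \<Rightarrow> kcov K X z \<alpha> $ I | None \<Rightarrow> cnj (X z $ I)) *v c) $ I"
      unfolding matrix_vector_mult_def
      unfolding vec_lambda_beta by (rule sum.cong) (simp_all add: Wu_def cnjv_def split: option.split)
    thus ?thesis using Ac by simp
  qed
  define E where "E a b = (case a of
           Some \<alpha> \<Rightarrow> (case b of
               Some \<beta> \<Rightarrow> symp (kcov K X z \<alpha>, kcov K F z \<alpha>) (cnjv (kcov K X z \<beta>), cnjv (kcov K F z \<beta>))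
             | None \<Rightarrow> symp (kcov K X z \<alpha>, kcov K F z \<alpha>) (X z, F z))
         | None \<Rightarrow> (case b of
               Some \<beta> \<Rightarrow> symp (cnjv (X z), cnjv (F z)) (cnjv (kcov K X z \<beta>), cnjv (kcov K F z \<beta>))
             | None \<Rightarrow> symp (cnjv (X z), cnjv (F z)) (X z, F z)))" for a b
  define M where "M = (\<chi> a b. \<i> * E a b)"
  have pdM: "pos_def_cmat M" using pd unfolding M_def E_def .
  have entry: "E a b = (\<Sum>I\<in>UNIV. Wu a $ I * cnj (Wl b $ I) - Wl a $ I * cnj (Wu b $ I))" for a b
    unfolding E_def by (cases a; cases b) (simp_all add: Wu_def Wl_def symp_def cnjv_def)
  show "c = 0"
  proof (rule ccontr)
    assume nz: "c \<noteq> 0"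
    define x where "x = (\<chi> a. cnj (c $ a))"
    have "x \<noteq> 0"
    proof
      assume "x = 0"
      then have "x $ a = 0" for a by simp
      then have "c $ a = 0" for a unfolding x_def by simp
      then show False using nz by (simp add: vec_eq_iff)
    qed
    define q where "q = (\<Sum>a\<in>UNIV. \<Sum>b\<in>UNIV. cnj (x $ a) * M $ a $ b * x $ b)"
    have qpos: "Re q > 0" using pdM \<open>x \<noteq> 0\<close> unfolding pos_def_cmat_def Let_def q_def by blast
    have "q = (\<Sum>a\<in>UNIV. \<Sum>b\<in>UNIV. c $ a * (\<i> * (\<Sum>I\<in>UNIV. Wu a $ I * cnj (Wl b $ I) - Wl a $ I * cnj (Wu b $ I))) * cnj (c $ b))"
      unfolding q_def M_def x_def vec_lambda_beta complex_cnj_cnj entry ..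
    also have "\<dots> = 0"
      by (rule quad_zero[where c="\<lambda>a. c $ a" and U="\<lambda>a I. Wu a $ I" and L="\<lambda>a I. Wl a $ I"]) (rule S)
    finally show False using qpos by simp
  qed
qed

end
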